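(* Let $R$ be a Bézout ring of Krull dimension at most one whose space of minimal prime ideals $\mathrm{MinSpec}(R)$ (with the Zariski topology) is compact. Then $R$ is a Kaplansky ring.
   Context: All rings are commutative with identity. $R$ is Bézout if every finitely generated ideal is principal. $R$ is a Kaplansky ring (elementary divisor ring) if for every matrix $A$ with entries in $R$ there exist invertible matrices $P,Q$ and a diagonal matrix $D$ with entries in $R$ such that $PAQ=D$. *)

theory Defs
  imports "HOL-Analysis.Analysis" "Jordan_Normal_Form.Matrix"
begin

definition cr_ideal :: "'a::comm_ring_1 set \<Rightarrow> bool" where
  "cr_ideal I \<longleftrightarrow> 0 \<in> I \<and> (\<forall>x\<in>I. \<forall>y\<in>I. x + y \<in> I) \<and> (\<forall>r. \<forall>x\<in>I. r * x \<in> I)"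

definition cr_prime_ideal :: "'a::comm_ring_1 set \<Rightarrow> bool" where
  "cr_prime_ideal P \<longleftrightarrow> cr_ideal P \<and> P \<noteq> UNIV \<and> (\<forall>x y. x * y \<in> P \<longrightarrow> x \<in> P \<or> y \<in> P)"

definition cr_minimal_prime :: "'a::comm_ring_1 set \<Rightarrow> bool" where
  "cr_minimal_prime P \<longleftrightarrow> cr_prime_ideal P \<and> (\<forall>Q. cr_prime_ideal Q \<and> Q \<subseteq> P \<longrightarrow> Q = P)"

definition Spec :: "'a::comm_ring_1 set set" where
  "Spec = {P. cr_prime_ideal P}"

definition MinSpec :: "'a::comm_ring_1 set set" where
  "MinSpec = {P. cr_minimal_prime P}"

definition zariski_topology :: "'a::comm_ring_1 set topology" where
  "zariski_topology = topology_generated_by (range (\<lambda>a. {P \<in> Spec. a \<notin> P}))"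

definition krull_dim_le_one :: "'a::comm_ring_1 itself \<Rightarrow> bool" where
  "krull_dim_le_one _ \<longleftrightarrow>
     \<not> (\<exists>P Q S :: 'a set. cr_prime_ideal P \<and> cr_prime_ideal Q \<and> cr_prime_ideal S \<and> P \<subset> Q \<and> Q \<subset> S)"

definition ideal_generated :: "'a::comm_ring_1 set \<Rightarrow> 'a set" where
  "ideal_generated X = \<Inter>{I. cr_ideal I \<and> X \<subseteq> I}"

definition principal_ideal :: "'a::comm_ring_1 set \<Rightarrow> bool" where
  "principal_ideal I \<longleftrightarrow> (\<exists>a. I = {r * a | r. True})"

definition bezout_ring :: "'a::comm_ring_1 itself \<Rightarrow> bool" where
  "bezout_ring _ \<longleftrightarrow> (\<forall>X :: 'a set. finite X \<longrightarrow> principal_ideal (ideal_generated X))"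

definition kaplansky_ring :: "'a::comm_ring_1 itself \<Rightarrow> bool" where
  "kaplansky_ring _ \<longleftrightarrow> (\<forall>m n. \<forall>A :: 'a mat. A \<in> carrier_mat m n \<longrightarrow>
     (\<exists>P Q. P \<in> carrier_mat m m \<and> Q \<in> carrier_mat n n \<and> invertible_mat P \<and> invertible_mat Q
        \<and> diagonal_mat (P * A * Q)))"

end

theory Submission
  imports Defs
begin

lemma ideal_0: "cr_ideal I \<Longrightarrow> 0 \<in> I" unfolding cr_ideal_def by auto
lemma ideal_add: "cr_ideal I \<Longrightarrow> x \<in> I \<Longrightarrow> y \<in> I \<Longrightarrow> x + y \<in> I" unfolding cr_ideal_def by auto
lemma ideal_mult: "cr_ideal I \<Longrightarrow> x \<in> I \<Longrightarrow> r * x \<in> I" unfolding cr_ideal_def by auto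
lemma ideal_mult2: "cr_ideal I \<Longrightarrow> x \<in> I \<Longrightarrow> x * r \<in> I"
  using ideal_mult[of I x r] by (simp add: mult.commute)
lemma ideal_neg: "cr_ideal I \<Longrightarrow> x \<in> I \<Longrightarrow> - x \<in> I"
  using ideal_mult[of I x "-1"] by simp
lemma ideal_diff: "cr_ideal I \<Longrightarrow> x \<in> I \<Longrightarrow> y \<in> I \<Longrightarrow> x - y \<in> I"
  using ideal_add[of I x "-y"] ideal_neg[of I y] by simp
lemma ideal_one: "cr_ideal I \<Longrightarrow> 1 \<in> I \<Longrightarrow> I = UNIV"
  using ideal_mult[of I 1] by auto

lemma prime_ideal: "cr_prime_ideal P \<Longrightarrow> cr_ideal P" unfolding cr_prime_ideal_def by auto
lemma prime_one: "cr_prime_ideal P \<Longrightarrow> (1::'a::comm_ring_1) \<notin> P"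
  unfolding cr_prime_ideal_def using ideal_one by blast
lemma prime_prod: "cr_prime_ideal P \<Longrightarrow> x * y \<in> P \<Longrightarrow> x \<in> P \<or> y \<in> P"
  unfolding cr_prime_ideal_def by auto
lemma prime_pow: "cr_prime_ideal P \<Longrightarrow> x ^ n \<in> P \<Longrightarrow> x \<in> P"
proof (induction n)
  case 0 then show ?case using prime_one by auto
next
  case (Suc n) then show ?case using prime_prod[of P x "x^n"] by auto
qed
lemma prime_mem_mult: "cr_prime_ideal P \<Longrightarrow> x \<in> P \<Longrightarrow> r * x \<in> P"
  using ideal_mult prime_ideal by blast
lemma prime_mem_mult2: "cr_prime_ideal P \<Longrightarrow> x \<in> P \<Longrightarrow> x * r \<in> P"
  using ideal_mult2 prime_ideal by blast
lemma prime_mem_add: "cr_prime_ideal P \<Longrightarrow> x \<in> P \<Longrightarrow> y \<in> P \<Longrightarrow> x + y \<in> P"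
  using ideal_add prime_ideal by blast
lemma prime_mem_diff: "cr_prime_ideal P \<Longrightarrow> x \<in> P \<Longrightarrow> y \<in> P \<Longrightarrow> x - y \<in> P"
  using ideal_diff prime_ideal by blast
lemma prime_zero: "cr_prime_ideal P \<Longrightarrow> 0 \<in> P"
  using ideal_0 prime_ideal by blast

section \<open>Existence of prime ideals (Zorn)\<close>

lemma exists_prime_avoiding:
  fixes I S :: "'a::comm_ring_1 set"
  assumes I: "cr_ideal I" and S1: "1 \<in> S" and Sm: "\<forall>x\<in>S. \<forall>y\<in>S. x * y \<in> S"
    and dis: "I \<inter> S = {}"
  shows "\<exists>P. cr_prime_ideal P \<and> I \<subseteq> P \<and> P \<inter> S = {}"
proof -
  define A where "A = {J. cr_ideal J \<and> I \<subseteq> J \<and> J \<inter> S = {}}"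
  have "\<exists>M\<in>A. \<forall>X\<in>A. M \<subseteq> X \<longrightarrow> X = M"
  proof (rule Zorn_Lemma2, intro ballI)
    fix C assume C: "C \<in> chains A"
    show "\<exists>U\<in>A. \<forall>X\<in>C. X \<subseteq> U"
    proof (cases "C = {}")
      case True then show ?thesis using I dis unfolding A_def by auto
    next
      case False
      have CA: "C \<subseteq> A" and ch: "\<forall>X\<in>C. \<forall>Y\<in>C. X \<subseteq> Y \<or> Y \<subseteq> X"
        using C unfolding chains_def chain_subset_def by auto
      have "cr_ideal (\<Union>C)"
        unfolding cr_ideal_def
      proof (intro conjI ballI allI)
        obtain X where "X \<in> C" using False by auto
        then have "cr_ideal X" using CA unfolding A_def by auto
        then have "0 \<in> X" by (rule ideal_0)
        then show "0 \<in> \<Union>C" using \<open>X \<in> C\<close> by auto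
      next
        fix x y assume "x \<in> \<Union>C" "y \<in> \<Union>C"
        then obtain X Y where XY: "X \<in> C" "Y \<in> C" "x \<in> X" "y \<in> Y" by auto
        then have "X \<subseteq> Y \<or> Y \<subseteq> X" using ch by auto
        moreover have "cr_ideal X" "cr_ideal Y" using XY CA unfolding A_def by auto
        ultimately have "x + y \<in> Y \<or> x + y \<in> X" using XY ideal_add by blast
        then show "x + y \<in> \<Union>C" using XY by auto
      next
        fix r x assume "x \<in> \<Union>C"
        then obtain X where "X \<in> C" "x \<in> X" by auto
        moreover then have "cr_ideal X" using CA unfolding A_def by auto
        ultimately show "r * x \<in> \<Union>C" using ideal_mult[of X x r] by auto
      qed
      moreover have "I \<subseteq> \<Union>C" using False CA unfolding A_def by auto
      moreover have "\<Union>C \<inter> S = {}" using CA unfolding A_def by auto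
      ultimately show ?thesis unfolding A_def by auto
    qed
  qed
  then obtain M where MA: "M \<in> A" and Mmax: "\<forall>X\<in>A. M \<subseteq> X \<longrightarrow> X = M" by auto
  have M: "cr_ideal M" "I \<subseteq> M" "M \<inter> S = {}" using MA unfolding A_def by auto
  have "cr_prime_ideal M"
    unfolding cr_prime_ideal_def
  proof (intro conjI allI impI)
    show "cr_ideal M" using M by auto
    show "M \<noteq> UNIV" using M S1 by auto
  next
    fix x y assume xy: "x * y \<in> M"
    show "x \<in> M \<or> y \<in> M"
    proof (rule ccontr)
      assume nxy: "\<not> (x \<in> M \<or> y \<in> M)"
      have ext: "\<exists>m\<in>M. \<exists>r. m + r * z \<in> S" if zM: "z \<notin> M" for z
      proof (rule ccontr)
        assume no: "\<not> (\<exists>m\<in>M. \<exists>r. m + r * z \<in> S)"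
        define J where "J = {m + r * z | m r. m \<in> M}"
        have "cr_ideal J" unfolding cr_ideal_def J_def
        proof (intro conjI ballI allI)
          show "0 \<in> {m + r * z |m r. m \<in> M}" using ideal_0[OF M(1)] by (auto intro!: exI[of _ 0])
        next
          fix a b assume "a \<in> {m + r * z |m r. m \<in> M}" "b \<in> {m + r * z |m r. m \<in> M}"
          then obtain m1 r1 m2 r2 where "a = m1 + r1 * z" "b = m2 + r2 * z" "m1 \<in> M" "m2 \<in> M" by auto
          then show "a + b \<in> {m + r * z |m r. m \<in> M}"
            by (intro CollectI exI[of _ "m1 + m2"] exI[of _ "r1 + r2"])
               (auto simp: algebra_simps intro: ideal_add[OF M(1)])
        next
          fix c a assume "a \<in> {m + r * z |m r. m \<in> M}"
          then obtain m1 r1 where "a = m1 + r1 * z" "m1 \<in> M" by auto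
          then show "c * a \<in> {m + r * z |m r. m \<in> M}"
            by (intro CollectI exI[of _ "c * m1"] exI[of _ "c * r1"])
               (auto simp: algebra_simps intro: ideal_mult[OF M(1)])
        qed
        moreover have "M \<subseteq> J"
        proof
          fix m assume "m \<in> M" then show "m \<in> J" unfolding J_def
            by (intro CollectI exI[of _ m] exI[of _ 0]) auto
        qed
        moreover have "J \<inter> S = {}" using no unfolding J_def by auto
        ultimately have "J \<in> A" using M unfolding A_def by auto
        with Mmax \<open>M \<subseteq> J\<close> have "J = M" by auto
        moreover have "z \<in> J" unfolding J_def using ideal_0[OF M(1)]
          by (intro CollectI exI[of _ 0] exI[of _ 1]) auto
        ultimately show False using zM by auto
      qed
      have "x \<notin> M" "y \<notin> M" using nxy by auto
      obtain m1 r1 where m1: "m1 \<in> M" "m1 + r1 * x \<in> S" using ext[OF \<open>x \<notin> M\<close>] by blast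
      obtain m2 r2 where m2: "m2 \<in> M" "m2 + r2 * y \<in> S" using ext[OF \<open>y \<notin> M\<close>] by blast
      have "(m1 + r1 * x) * (m2 + r2 * y) \<in> S" using Sm m1 m2 by auto
      moreover have "(m1 + r1 * x) * (m2 + r2 * y) = m1 * (m2 + r2 * y) + m2 * (r1 * x) + (r1 * r2) * (x * y)"
        by (simp add: algebra_simps)
      moreover have "m1 * (m2 + r2 * y) + m2 * (r1 * x) + (r1 * r2) * (x * y) \<in> M"
        by (rule ideal_add[OF M(1) ideal_add[OF M(1) ideal_mult2[OF M(1) m1(1)] ideal_mult2[OF M(1) m2(1)]] ideal_mult[OF M(1) xy]])
      ultimately show False using M(3) by auto
    qed
  qed
  then show ?thesis using M by auto
qed

lemma exists_prime_containing:
  fixes I :: "'a::comm_ring_1 set"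
  assumes "cr_ideal I" "1 \<notin> I"
  shows "\<exists>P. cr_prime_ideal P \<and> I \<subseteq> P"
  using exists_prime_avoiding[of I "{1}"] assms by auto

lemma minimal_over_witness:
  fixes Q J :: "'a::comm_ring_1 set"
  assumes Q: "cr_prime_ideal Q" and J: "cr_ideal J" "J \<subseteq> Q"
    and minQ: "\<forall>Q'. cr_prime_ideal Q' \<and> J \<subseteq> Q' \<and> Q' \<subseteq> Q \<longrightarrow> Q' = Q"
    and x: "x \<in> Q"
  shows "\<exists>s n. s \<notin> Q \<and> s * x ^ n \<in> J"
proof (rule ccontr)
  assume no: "\<not> (\<exists>s n. s \<notin> Q \<and> s * x ^ n \<in> J)"
  define S where "S = {s * x ^ n | s n. s \<notin> Q}"
  have "1 * x ^ 0 \<in> S" unfolding S_def using prime_one[OF Q] by blast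
  then have "1 \<in> S" by simp
  moreover have "\<forall>a\<in>S. \<forall>b\<in>S. a * b \<in> S"
  proof (intro ballI)
    fix a b assume "a \<in> S" "b \<in> S"
    then obtain s1 n1 s2 n2 where "a = s1 * x ^ n1" "b = s2 * x ^ n2" "s1 \<notin> Q" "s2 \<notin> Q"
      unfolding S_def by auto
    moreover then have "s1 * s2 \<notin> Q" using prime_prod[OF Q] by auto
    ultimately show "a * b \<in> S" unfolding S_def
      by (auto intro!: exI[of _ "s1 * s2"] exI[of _ "n1 + n2"] simp: power_add algebra_simps)
  qed
  moreover have "J \<inter> S = {}" using no unfolding S_def by auto
  ultimately obtain P where P: "cr_prime_ideal P" "J \<subseteq> P" "P \<inter> S = {}"
    using exists_prime_avoiding[OF J(1)] by blast
  have "P \<subseteq> Q"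
  proof
    fix y assume "y \<in> P"
    show "y \<in> Q"
    proof (rule ccontr)
      assume "y \<notin> Q"
      then have "y * x ^ 0 \<in> S" unfolding S_def by blast
      then show False using \<open>y \<in> P\<close> P(3) by auto
    qed
  qed
  then have "P = Q" using minQ P by auto
  moreover have "1 * x ^ 1 \<in> S" unfolding S_def using prime_one[OF Q] by blast
  ultimately show False using x P(3) by auto
qed

lemma minimal_prime_witness:
  fixes P :: "'a::comm_ring_1 set"
  assumes "cr_minimal_prime P" "x \<in> P"
  shows "\<exists>s n. s \<notin> P \<and> s * x ^ n = 0"
proof -
  have J: "cr_ideal {0::'a}" unfolding cr_ideal_def by auto
  have "cr_prime_ideal P" using assms unfolding cr_minimal_prime_def by auto
  moreover then have "{0} \<subseteq> P" using prime_zero by auto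
  ultimately show ?thesis
    using minimal_over_witness[OF _ J, of P x] assms unfolding cr_minimal_prime_def by auto
qed

lemma bezout_fin:
  fixes X :: "'a::comm_ring_1 set"
  assumes bez: "bezout_ring TYPE('a)" and fin: "finite X"
  shows "\<exists>g. (\<forall>I. cr_ideal I \<and> X \<subseteq> I \<longrightarrow> g \<in> I) \<and> (\<forall>x\<in>X. \<exists>r. x = r * g)"
proof -
  have "principal_ideal (ideal_generated X)" using bez fin unfolding bezout_ring_def by auto
  then obtain g where g: "ideal_generated X = {r * g | r. True}" unfolding principal_ideal_def by auto
  have "g \<in> ideal_generated X" unfolding g by (intro CollectI exI[of _ 1]) auto
  then have 1: "\<forall>I. cr_ideal I \<and> X \<subseteq> I \<longrightarrow> g \<in> I" unfolding ideal_generated_def by auto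
  have "\<forall>x\<in>X. x \<in> ideal_generated X" unfolding ideal_generated_def by auto
  then have "\<forall>x\<in>X. \<exists>r. x = r * g" unfolding g by auto
  with 1 show ?thesis by auto
qed

lemma bezout2:
  fixes a b :: "'a::comm_ring_1"
  assumes bez: "bezout_ring TYPE('a)"
  shows "\<exists>d u v x y. d = u * a + v * b \<and> a = x * d \<and> b = y * d"
proof -
  obtain g where g1: "\<forall>I. cr_ideal I \<and> {a, b} \<subseteq> I \<longrightarrow> g \<in> I" and g2: "\<forall>x\<in>{a,b}. \<exists>r. x = r * g"
    using bezout_fin[OF bez, of "{a,b}"] by auto
  define L where "L = {u * a + v * b | u v. True}"
  have "cr_ideal L" unfolding cr_ideal_def L_def
  proof (intro conjI ballI allI)
    show "0 \<in> {u * a + v * b |u v. True}" by (intro CollectI exI[of _ 0]) auto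
  next
    fix x y assume "x \<in> {u * a + v * b |u v. True}" "y \<in> {u * a + v * b |u v. True}"
    then obtain u1 v1 u2 v2 where "x = u1 * a + v1 * b" "y = u2 * a + v2 * b" by auto
    then show "x + y \<in> {u * a + v * b |u v. True}"
      by (intro CollectI exI[of _ "u1 + u2"] exI[of _ "v1 + v2"]) (auto simp: algebra_simps)
  next
    fix r x assume "x \<in> {u * a + v * b |u v. True}"
    then obtain u1 v1 where "x = u1 * a + v1 * b" by auto
    then show "r * x \<in> {u * a + v * b |u v. True}"
      by (intro CollectI exI[of _ "r * u1"] exI[of _ "r * v1"]) (auto simp: algebra_simps)
  qed
  moreover have "a \<in> L" unfolding L_def by (intro CollectI exI[of _ 1] exI[of _ 0]) simp
  moreover have "b \<in> L" unfolding L_def by (intro CollectI exI[of _ 0] exI[of _ 1]) simp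
  ultimately have "cr_ideal L \<and> {a, b} \<subseteq> L" by auto
  then have "g \<in> L" using g1 by auto
  then show ?thesis using g2 unfolding L_def by auto
qed

definition mreg :: "'a::comm_ring_1 \<Rightarrow> bool" where
  "mreg z \<longleftrightarrow> (\<forall>P. cr_minimal_prime P \<longrightarrow> z \<notin> P)"

lemma minimal_prime_prime: "cr_minimal_prime P \<Longrightarrow> cr_prime_ideal P"
  unfolding cr_minimal_prime_def by auto

lemma compact_lemma:
  fixes a :: "'a::comm_ring_1"
  assumes bez: "bezout_ring TYPE('a)"
    and comp: "compact_space (subtopology (zariski_topology :: 'a set topology) MinSpec)"
  shows "\<exists>b N. a ^ N * b = 0 \<and> (\<forall>P. cr_minimal_prime P \<longrightarrow> a \<in> P \<longrightarrow> b \<notin> P)"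
proof -
  define D where "D = (\<lambda>t::'a. {P \<in> Spec. t \<notin> P})"
  have top: "topspace (zariski_topology :: 'a set topology) = \<Union> (range D)"
    unfolding zariski_topology_def D_def by simp
  have MS: "MinSpec \<subseteq> topspace (zariski_topology :: 'a set topology)"
  proof
    fix P :: "'a set" assume "P \<in> MinSpec"
    then have "cr_prime_ideal P" unfolding MinSpec_def using minimal_prime_prime by auto
    then have "P \<in> D 1" unfolding D_def Spec_def using prime_one by auto
    then show "P \<in> topspace zariski_topology" unfolding top by auto
  qed
  have "topspace (subtopology (zariski_topology :: 'a set topology) MinSpec) = MinSpec"
    using MS by auto
  then have "compactin (subtopology (zariski_topology :: 'a set topology) MinSpec) MinSpec"
    using comp unfolding compact_space_def by simp
  then have "compactin (zariski_topology :: 'a set topology) MinSpec"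
    unfolding compactin_subtopology by simp
  then have cov: "\<forall>U. (\<forall>V\<in>U. openin (zariski_topology :: 'a set topology) V) \<and> (MinSpec :: 'a set set) \<subseteq> \<Union>U \<longrightarrow>
      (\<exists>F. finite F \<and> F \<subseteq> U \<and> MinSpec \<subseteq> \<Union>F)"
    unfolding compactin_def by (rule conjunct2)
  define K where "K = {t. \<exists>n. t * a ^ n = 0}"
  define T where "T = insert a K"
  have opn: "\<forall>V\<in>D ` T. openin (zariski_topology :: 'a set topology) V"
  proof
    fix V assume "V \<in> D ` T"
    then have "V \<in> range D" by auto
    then show "openin (zariski_topology :: 'a set topology) V" unfolding zariski_topology_def D_def
      by (rule topology_generated_by_Basis)
  qed
  have "(MinSpec :: 'a set set) \<subseteq> \<Union> (D ` T)"
  proof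
    fix P :: "'a set" assume "P \<in> MinSpec"
    then have Pm: "cr_minimal_prime P" unfolding MinSpec_def by auto
    then have Pp: "cr_prime_ideal P" by (rule minimal_prime_prime)
    show "P \<in> \<Union> (D ` T)"
    proof (cases "a \<in> P")
      case False
      then have "P \<in> D a" unfolding D_def Spec_def using Pp by simp
      moreover have "a \<in> T" unfolding T_def by simp
      ultimately show ?thesis by blast
    next
      case True
      then obtain s n where "s \<notin> P" "s * a ^ n = 0" using minimal_prime_witness[OF Pm True] by blast
      then have "s \<in> T" "P \<in> D s" unfolding T_def K_def D_def Spec_def using Pp by blast+
      then show ?thesis by auto
    qed
  qed
  then obtain F where F: "finite F" "F \<subseteq> D ` T" "(MinSpec :: 'a set set) \<subseteq> \<Union>F" using cov opn by meson
  obtain T' where T': "T' \<subseteq> T" "finite T'" "F = D ` T'" using finite_subset_image[OF F(1,2)] by auto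
  define X where "X = T' \<inter> K"
  have "finite X" using T' unfolding X_def by auto
  then obtain g where g1: "\<forall>I. cr_ideal I \<and> X \<subseteq> I \<longrightarrow> g \<in> I" and g2: "\<forall>x\<in>X. \<exists>r. x = r * g"
    using bezout_fin[OF bez] by blast
  have "cr_ideal K" unfolding cr_ideal_def K_def
  proof (intro conjI ballI allI)
    show "0 \<in> {t. \<exists>n. t * a ^ n = 0}" by auto
  next
    fix x y assume "x \<in> {t. \<exists>n. t * a ^ n = 0}" "y \<in> {t. \<exists>n. t * a ^ n = 0}"
    then obtain n1 n2 where "x * a ^ n1 = 0" "y * a ^ n2 = 0" by auto
    have "(x + y) * a ^ (n1 + n2) = (x * a ^ n1) * a ^ n2 + (y * a ^ n2) * a ^ n1"
      by (simp add: power_add algebra_simps)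
    then have "(x + y) * a ^ (n1 + n2) = 0" using \<open>x * a ^ n1 = 0\<close> \<open>y * a ^ n2 = 0\<close> by simp
    then show "x + y \<in> {t. \<exists>n. t * a ^ n = 0}" by auto
  next
    fix r x assume "x \<in> {t. \<exists>n. t * a ^ n = 0}"
    then obtain n where "x * a ^ n = 0" by auto
    then have "(r * x) * a ^ n = 0" by (simp add: mult.assoc)
    then show "r * x \<in> {t. \<exists>n. t * a ^ n = 0}" by auto
  qed
  moreover have "X \<subseteq> K" unfolding X_def by auto
  ultimately have "g \<in> K" using g1 by auto
  then obtain N where N: "g * a ^ N = 0" unfolding K_def by auto
  have "\<forall>P. cr_minimal_prime P \<longrightarrow> a \<in> P \<longrightarrow> g \<notin> P"
  proof (intro allI impI)
    fix P :: "'a set" assume Pm: "cr_minimal_prime P" and aP: "a \<in> P"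
    then have "P \<in> MinSpec" unfolding MinSpec_def by auto
    then have "P \<in> \<Union> (D ` T')" using F(3) T'(3) by auto
    then obtain t where t: "t \<in> T'" "P \<in> D t" by auto
    then have "t \<notin> P" unfolding D_def by auto
    then have "t \<noteq> a" using aP by auto
    then have "t \<in> X" using t T' unfolding X_def T_def by auto
    then obtain r where "t = r * g" using g2 by auto
    then show "g \<notin> P" using \<open>t \<notin> P\<close> prime_mem_mult[OF minimal_prime_prime[OF Pm]] by auto
  qed
  moreover have "a ^ N * g = 0" using N by (simp add: mult.commute)
  ultimately show ?thesis by blast
qed

lemma SR:
  fixes p q z :: "'a::comm_ring_1"
  assumes dim: "krull_dim_le_one TYPE('a)" and mr: "mreg z" and one: "\<alpha> * p + \<beta> * q + \<gamma> * z = 1"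
  shows "\<exists>\<tau> a b. a * (p + q * \<tau>) + b * z = 1"
proof -
  define J where "J = {k * z | k. True}"
  have J: "cr_ideal J" unfolding cr_ideal_def J_def
  proof (intro conjI ballI allI)
    show "0 \<in> {k * z |k. True}" by (intro CollectI exI[of _ 0]) simp
  next
    fix x y assume "x \<in> {k * z |k. True}" "y \<in> {k * z |k. True}"
    then obtain k1 k2 where "x = k1 * z" "y = k2 * z" by auto
    then show "x + y \<in> {k * z |k. True}" by (intro CollectI exI[of _ "k1 + k2"]) (simp add: algebra_simps)
  next
    fix r x assume "x \<in> {k * z |k. True}"
    then obtain k1 where "x = k1 * z" by auto
    then show "r * x \<in> {k * z |k. True}" by (intro CollectI exI[of _ "r * k1"]) (simp add: algebra_simps)
  qed
  define I where "I = {r * p + t * z + s | r t s. \<exists>n k. s * p ^ n = k * z}"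
  have I: "cr_ideal I" unfolding cr_ideal_def I_def
  proof (intro conjI ballI allI)
    show "0 \<in> {r * p + t * z + s | r t s. \<exists>n k. s * p ^ n = k * z}"
      by (intro CollectI exI[of _ 0] conjI exI[of _ "0::nat"]) simp_all
  next
    fix x y assume "x \<in> {r * p + t * z + s | r t s. \<exists>n k. s * p ^ n = k * z}"
      "y \<in> {r * p + t * z + s | r t s. \<exists>n k. s * p ^ n = k * z}"
    then obtain r1 t1 s1 n1 k1 r2 t2 s2 n2 k2 where
      x: "x = r1 * p + t1 * z + s1" "s1 * p ^ n1 = k1 * z" and
      y: "y = r2 * p + t2 * z + s2" "s2 * p ^ n2 = k2 * z" by blast
    have "(s1 + s2) * p ^ (n1 + n2) = (s1 * p ^ n1) * p ^ n2 + (s2 * p ^ n2) * p ^ n1"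
      by (simp add: power_add algebra_simps)
    also have "\<dots> = (k1 * p ^ n2 + k2 * p ^ n1) * z" using x y by (simp add: algebra_simps)
    finally have "(s1 + s2) * p ^ (n1 + n2) = (k1 * p ^ n2 + k2 * p ^ n1) * z" .
    moreover have "x + y = (r1 + r2) * p + (t1 + t2) * z + (s1 + s2)" using x y by (simp add: algebra_simps)
    ultimately show "x + y \<in> {r * p + t * z + s | r t s. \<exists>n k. s * p ^ n = k * z}" by blast
  next
    fix c x assume "x \<in> {r * p + t * z + s | r t s. \<exists>n k. s * p ^ n = k * z}"
    then obtain r1 t1 s1 n1 k1 where
      x: "x = r1 * p + t1 * z + s1" "s1 * p ^ n1 = k1 * z" by blast
    have "(c * s1) * p ^ n1 = (c * k1) * z" using x by (simp add: algebra_simps)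
    moreover have "c * x = (c * r1) * p + (c * t1) * z + (c * s1)" using x by (simp add: algebra_simps)
    ultimately show "c * x \<in> {r * p + t * z + s | r t s. \<exists>n k. s * p ^ n = k * z}" by blast
  qed
  have "1 \<in> I"
  proof (rule ccontr)
    assume "1 \<notin> I"
    then obtain Q where Q: "cr_prime_ideal Q" "I \<subseteq> Q" using exists_prime_containing[OF I] by blast
    have "z = 0 * p + 1 * z + 0 \<and> (0::'a) * p ^ 0 = 0 * z" by simp
    then have "z \<in> I" unfolding I_def by blast
    then have zQ: "z \<in> Q" using Q by auto
    have JQ: "J \<subseteq> Q" unfolding J_def using zQ prime_mem_mult[OF Q(1)] by auto
    have minQ: "\<forall>Q'. cr_prime_ideal Q' \<and> J \<subseteq> Q' \<and> Q' \<subseteq> Q \<longrightarrow> Q' = Q"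
    proof (intro allI impI)
      fix Q' assume H: "cr_prime_ideal Q' \<and> J \<subseteq> Q' \<and> Q' \<subseteq> Q"
      have "1 * z \<in> J" unfolding J_def by blast
      then have "z \<in> Q'" using H by auto
      then have "\<not> cr_minimal_prime Q'" using mr unfolding mreg_def by auto
      then obtain Q'' where Q'': "cr_prime_ideal Q''" "Q'' \<subseteq> Q'" "Q'' \<noteq> Q'"
        using H unfolding cr_minimal_prime_def by auto
      show "Q' = Q"
      proof (rule ccontr)
        assume "Q' \<noteq> Q"
        then have "Q'' \<subset> Q'" "Q' \<subset> Q" using H Q'' by auto
        then show False using dim Q'' H Q(1) unfolding krull_dim_le_one_def by blast
      qed
    qed
    have "p = 1 * p + 0 * z + 0 \<and> (0::'a) * p ^ 0 = 0 * z" by simp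
    then have "p \<in> I" unfolding I_def by blast
    then have "p \<in> Q" using Q by auto
    then obtain s n where s: "s \<notin> Q" "s * p ^ n \<in> J"
      using minimal_over_witness[OF Q(1) J JQ minQ] by blast
    then obtain k where "s * p ^ n = k * z" unfolding J_def by auto
    moreover have "s = 0 * p + 0 * z + s" by simp
    ultimately have "s \<in> I" unfolding I_def by blast
    then show False using s Q by auto
  qed
  then obtain r t s n k where rts: "1 = r * p + t * z + s" and sk: "s * p ^ n = k * z"
    unfolding I_def by blast
  define g where "g = p + q * (\<beta> * s)"
  define L where "L = {a * g + b * z | a b. True}"
  have L: "cr_ideal L" unfolding cr_ideal_def L_def
  proof (intro conjI ballI allI)
    show "0 \<in> {a * g + b * z | a b. True}" by (intro CollectI exI[of _ 0]) simp
  next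
    fix x y assume "x \<in> {a * g + b * z | a b. True}" "y \<in> {a * g + b * z | a b. True}"
    then obtain a1 b1 a2 b2 where "x = a1 * g + b1 * z" "y = a2 * g + b2 * z" by blast
    then show "x + y \<in> {a * g + b * z | a b. True}"
      by (intro CollectI exI[of _ "a1 + a2"] exI[of _ "b1 + b2"]) (simp add: algebra_simps)
  next
    fix c x assume "x \<in> {a * g + b * z | a b. True}"
    then obtain a1 b1 where "x = a1 * g + b1 * z" by blast
    then show "c * x \<in> {a * g + b * z | a b. True}"
      by (intro CollectI exI[of _ "c * a1"] exI[of _ "c * b1"]) (simp add: algebra_simps)
  qed
  have "1 \<in> L"
  proof (rule ccontr)
    assume "1 \<notin> L"
    then obtain M where M: "cr_prime_ideal M" "L \<subseteq> M" using exists_prime_containing[OF L] by blast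
    have "g = 1 * g + 0 * z" by simp
    then have "g \<in> L" unfolding L_def by blast
    then have gM: "g \<in> M" using M by auto
    have "z = 0 * g + 1 * z" by simp
    then have "z \<in> L" unfolding L_def by blast
    then have zM: "z \<in> M" using M by auto
    show False
    proof (cases "p \<in> M")
      case True
      have "(q * \<beta>) * s = g - p" unfolding g_def by (simp add: algebra_simps)
      then have "(q * \<beta>) * s \<in> M" using gM True prime_mem_diff[OF M(1)] by auto
      moreover have "q * \<beta> \<notin> M"
      proof
        assume "q * \<beta> \<in> M"
        have "1 = \<alpha> * p + q * \<beta> + \<gamma> * z" using one by (simp add: algebra_simps)
        moreover have "\<alpha> * p + q * \<beta> + \<gamma> * z \<in> M"
          by (rule prime_mem_add[OF M(1) prime_mem_add[OF M(1) prime_mem_mult[OF M(1) True] \<open>q * \<beta> \<in> M\<close>] prime_mem_mult[OF M(1) zM]])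
        ultimately show False using prime_one[OF M(1)] by auto
      qed
      ultimately have "s \<in> M" using prime_prod[OF M(1)] by auto
      moreover have "r * p + t * z + s \<in> M"
        by (rule prime_mem_add[OF M(1) prime_mem_add[OF M(1) prime_mem_mult[OF M(1) True] prime_mem_mult[OF M(1) zM]] \<open>s \<in> M\<close>])
      then show False using rts prime_one[OF M(1)] by auto
    next
      case False
      have "k * z \<in> M" using zM prime_mem_mult[OF M(1)] by auto
      then have "s * p ^ n \<in> M" using sk by simp
      then have "s \<in> M" using False prime_prod[OF M(1)] prime_pow[OF M(1)] by blast
      then have "q * (\<beta> * s) \<in> M" using prime_mem_mult[OF M(1)] prime_mem_mult2[OF M(1)] by auto
      then have "g - q * (\<beta> * s) \<in> M" using gM prime_mem_diff[OF M(1)] by auto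
      then show False using False unfolding g_def by simp
    qed
  qed
  then obtain a b where "1 = a * g + b * z" unfolding L_def by blast
  then have "a * (p + q * (\<beta> * s)) + b * z = 1" unfolding g_def by simp
  then show ?thesis by blast
qed

lemma hermite:
  fixes a b :: "'a::comm_ring_1"
  assumes bez: "bezout_ring TYPE('a)" and dim: "krull_dim_le_one TYPE('a)"
    and comp: "compact_space (subtopology (zariski_topology :: 'a set topology) MinSpec)"
  shows "\<exists>d x' y' c1 c2. a = d * x' \<and> b = d * y' \<and> c1 * x' + c2 * y' = 1"
proof -
  obtain d u v x y where hd: "d = u * a + v * b" and ha: "a = x * d" and hb: "b = y * d"
    using bezout2[OF bez] by blast
  define e where "e = 1 - u * x - v * y"
  have "d * e = d - u * a - v * b" unfolding e_def using ha hb by (simp add: algebra_simps)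
  then have de: "d * e = 0" using hd by simp
  have one: "1 = u * x + v * y + e" unfolding e_def by simp
  obtain x0 N where x0: "x ^ N * x0 = 0" and x0P: "\<forall>P. cr_minimal_prime P \<longrightarrow> x \<in> P \<longrightarrow> x0 \<notin> P"
    using compact_lemma[OF bez comp, where a=x] by blast
  obtain g t0 k0 y1 e1 where hg: "g = t0 * y + k0 * e" and hy: "y = y1 * g" and he: "e = e1 * g"
    using bezout2[OF bez] by blast
  define x1 where "x1 = x + x0 * g"
  have mr: "mreg x1" unfolding mreg_def
  proof (intro allI impI)
    fix P :: "'a set" assume Pm: "cr_minimal_prime P"
    then have P: "cr_prime_ideal P" by (rule minimal_prime_prime)
    show "x1 \<notin> P"
    proof (cases "x \<in> P")
      case True
      then have "x0 \<notin> P" using x0P Pm by auto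
      moreover have "g \<notin> P"
      proof
        assume "g \<in> P"
        then have "y \<in> P" "e \<in> P" using hy he prime_mem_mult[OF P] by auto
        then have "u * x + v * y + e \<in> P"
          by (rule prime_mem_add[OF P prime_mem_add[OF P prime_mem_mult[OF P True] prime_mem_mult[OF P]]])
        then show False using one prime_one[OF P] by auto
      qed
      ultimately have "x0 * g \<notin> P" using prime_prod[OF P] by auto
      then show ?thesis using True prime_mem_diff[OF P, of x1 x] unfolding x1_def by auto
    next
      case False
      then have "x ^ N \<notin> P" using prime_pow[OF P] by auto
      moreover have "x ^ N * x0 \<in> P" using x0 prime_zero[OF P] by simp
      ultimately have "x0 \<in> P" using prime_prod[OF P] by auto
      then have "x0 * g \<in> P" using prime_mem_mult2[OF P] by auto
      then show ?thesis using False prime_mem_diff[OF P, of x1 "x0 * g"] unfolding x1_def by auto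
    qed
  qed
  have "(v - u * x0 * t0) * y + (1 - u * x0 * k0) * e + u * x1 = u * x + v * y + e"
    unfolding x1_def hg by (simp add: algebra_simps)
  then have "(v - u * x0 * t0) * y + (1 - u * x0 * k0) * e + u * x1 = 1" using one by simp
  then obtain \<tau> \<alpha>' \<beta>' where ab: "\<alpha>' * (y + e * \<tau>) + \<beta>' * x1 = 1"
    using SR[OF dim mr] by blast
  define y' where "y' = y + e * \<tau>"
  define x' where "x' = x1 - y' * x0 * t0"
  have "d * x' = d * x + x0 * k0 * (d * e) - \<tau> * x0 * t0 * (d * e)"
    unfolding x'_def y'_def x1_def hg by (simp add: algebra_simps)
  then have 1: "a = d * x'" using de ha by (simp add: mult.commute)
  have "d * y' = d * y + \<tau> * (d * e)" unfolding y'_def by (simp add: algebra_simps)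
  then have 2: "b = d * y'" using de hb by (simp add: mult.commute)
  have "\<beta>' * x' + (\<alpha>' + \<beta>' * x0 * t0) * y' = \<alpha>' * (y + e * \<tau>) + \<beta>' * x1"
    unfolding x'_def y'_def by (simp add: algebra_simps)
  then have 3: "\<beta>' * x' + (\<alpha>' + \<beta>' * x0 * t0) * y' = 1" using ab by simp
  show ?thesis using 1 2 3 by blast
qed

lemma K2:
  fixes a11 a12 a21 a22 :: "'a::comm_ring_1"
  assumes bez: "bezout_ring TYPE('a)" and dim: "krull_dim_le_one TYPE('a)"
    and comp: "compact_space (subtopology (zariski_topology :: 'a set topology) MinSpec)"
    and cont: "l11 * a11 + l12 * a12 + l21 * a21 + l22 * a22 = 1"
  shows "\<exists>p q s t. p * (a11 * s + a12 * t) + q * (a21 * s + a22 * t) = 1"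
proof -
  obtain r1 u1 v1 x1 y1 where hr: "r1 = u1 * a11 + v1 * a12" and h11: "a11 = x1 * r1" and h12: "a12 = y1 * r1"
    using bezout2[OF bez] by blast
  obtain b N where bN: "r1 ^ N * b = 0" and bP: "\<forall>P. cr_minimal_prime P \<longrightarrow> r1 \<in> P \<longrightarrow> b \<notin> P"
    using compact_lemma[OF bez comp, where a=r1] by blast
  define g1 where "g1 = a11 + b * a21"
  define g2 where "g2 = a12 + b * a22"
  obtain x g1' g2' c c' where hg1: "g1 = x * g1'" and hg2: "g2 = x * g2'" and cc: "c * g1' + c' * g2' = 1"
    using hermite[OF bez dim comp] by blast
  have mr: "mreg x" unfolding mreg_def
  proof (intro allI impI notI)
    fix P :: "'a set" assume Pm: "cr_minimal_prime P" and xP: "x \<in> P"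
    have P: "cr_prime_ideal P" using Pm by (rule minimal_prime_prime)
    have g1P: "g1 \<in> P" and g2P: "g2 \<in> P" using hg1 hg2 xP prime_mem_mult2[OF P] by auto
    show False
    proof (cases "r1 \<in> P")
      case True
      then have bP': "b \<notin> P" using bP Pm by auto
      have a11P: "a11 \<in> P" and a12P: "a12 \<in> P" using h11 h12 True prime_mem_mult[OF P] by auto
      have "b * a21 = g1 - a11" unfolding g1_def by simp
      then have "b * a21 \<in> P" using g1P a11P prime_mem_diff[OF P] by auto
      then have a21P: "a21 \<in> P" using bP' prime_prod[OF P] by auto
      have "b * a22 = g2 - a12" unfolding g2_def by simp
      then have "b * a22 \<in> P" using g2P a12P prime_mem_diff[OF P] by auto
      then have a22P: "a22 \<in> P" using bP' prime_prod[OF P] by auto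
      have "l11 * a11 + l12 * a12 + l21 * a21 + l22 * a22 \<in> P"
        by (rule prime_mem_add[OF P prime_mem_add[OF P prime_mem_add[OF P prime_mem_mult[OF P a11P]
              prime_mem_mult[OF P a12P]] prime_mem_mult[OF P a21P]] prime_mem_mult[OF P a22P]])
      then show False using cont prime_one[OF P] by auto
    next
      case False
      then have "r1 ^ N \<notin> P" using prime_pow[OF P] by auto
      moreover have "r1 ^ N * b \<in> P" using bN prime_zero[OF P] by simp
      ultimately have bP': "b \<in> P" using prime_prod[OF P] by auto
      have "a11 = g1 - b * a21" unfolding g1_def by simp
      then have a11P: "a11 \<in> P" using g1P bP' prime_mem_diff[OF P] prime_mem_mult2[OF P] by metis
      have "a12 = g2 - b * a22" unfolding g2_def by simp
      then have a12P: "a12 \<in> P" using g2P bP' prime_mem_diff[OF P] prime_mem_mult2[OF P] by metis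
      have "u1 * a11 + v1 * a12 \<in> P"
        by (rule prime_mem_add[OF P prime_mem_mult[OF P a11P] prime_mem_mult[OF P a12P]])
      then show False using False hr by simp
    qed
  qed
  define y where "y = a21 * c + a22 * c'"
  define w where "w = - a21 * g2' + a22 * g1'"
  have "y * g1' - w * c' = a21 * (c * g1' + c' * g2')" unfolding y_def w_def by (simp add: algebra_simps)
  then have h21: "a21 = y * g1' - w * c'" using cc by simp
  have "y * g2' + w * c = a22 * (c * g1' + c' * g2')" unfolding y_def w_def by (simp add: algebra_simps)
  then have h22: "a22 = y * g2' + w * c" using cc by simp
  have h11': "a11 = x * g1' - b * a21" using hg1 unfolding g1_def by (simp add: algebra_simps)
  have h12': "a12 = x * g2' - b * a22" using hg2 unfolding g2_def by (simp add: algebra_simps)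
  have "l11 * a11 + l12 * a12 + l21 * a21 + l22 * a22
      = x * (l11 * g1' + l12 * g2') + (l21 - l11 * b) * a21 + (l22 - l12 * b) * a22"
    by (subst h11', subst h12', simp add: algebra_simps)
  also have "\<dots> = ((l21 - l11 * b) * g1' + (l22 - l12 * b) * g2') * y
      + (- (l21 - l11 * b) * c' + (l22 - l12 * b) * c) * w + (l11 * g1' + l12 * g2') * x"
    by (subst h21, subst h22, simp add: algebra_simps)
  finally have "((l21 - l11 * b) * g1' + (l22 - l12 * b) * g2') * y
      + (- (l21 - l11 * b) * c' + (l22 - l12 * b) * c) * w + (l11 * g1' + l12 * g2') * x = 1"
    using cont by simp
  then obtain \<tau> \<alpha>' \<beta>' where ab: "\<alpha>' * (y + w * \<tau>) + \<beta>' * x = 1"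
    using SR[OF dim mr] by blast
  define s where "s = c - g2' * \<tau>"
  define t where "t = c' + g1' * \<tau>"
  have e1: "g1 * s + g2 * t = x * (c * g1' + c' * g2')"
    unfolding hg1 hg2 s_def t_def by (simp add: algebra_simps)
  have e2: "a21 * s + a22 * t = y + w * \<tau>"
    unfolding y_def w_def s_def t_def by (simp add: algebra_simps)
  have "\<beta>' * (a11 * s + a12 * t) + (\<beta>' * b + \<alpha>') * (a21 * s + a22 * t)
      = \<beta>' * (g1 * s + g2 * t) + \<alpha>' * (a21 * s + a22 * t)"
    unfolding g1_def g2_def by (simp add: algebra_simps)
  also have "\<dots> = \<beta>' * x + \<alpha>' * (y + w * \<tau>)" unfolding e1 e2 cc by simp
  also have "\<dots> = 1" using ab by (simp add: algebra_simps)
  finally have "\<beta>' * (a11 * s + a12 * t) + (\<beta>' * b + \<alpha>') * (a21 * s + a22 * t) = 1" .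
  then show ?thesis by blast
qed

lemma hermite_fin:
  fixes f :: "'b \<Rightarrow> 'a::comm_ring_1"
  assumes herm: "\<And>a b :: 'a. \<exists>d x' y' c1 c2. a = d * x' \<and> b = d * y' \<and> c1 * x' + c2 * y' = 1"
    and fin: "finite S" and ne: "S \<noteq> {}"
  shows "\<exists>c f' l. (\<forall>s\<in>S. f s = c * f' s) \<and> (\<Sum>s\<in>S. l s * f' s) = 1"
  using fin ne
proof (induction S rule: finite_ne_induct)
  case (singleton x)
  show ?case by (rule exI[of _ "f x"], rule exI[of _ "\<lambda>_. 1"], rule exI[of _ "\<lambda>_. 1"]) simp
next
  case (insert x F)
  then obtain c f' l where IH: "\<forall>s\<in>F. f s = c * f' s" "(\<Sum>s\<in>F. l s * f' s) = 1" by blast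
  obtain d x' y' c1 c2 where H: "f x = d * x'" "c = d * y'" "c1 * x' + c2 * y' = 1"
    using herm[of "f x" c] by blast
  define f'' where "f'' = (\<lambda>s. if s = x then x' else y' * f' s)"
  define l'' where "l'' = (\<lambda>s. if s = x then c1 else c2 * l s)"
  have "\<forall>s\<in>insert x F. f s = d * f'' s"
    using IH(1) H insert.hyps unfolding f''_def by (auto simp: algebra_simps)
  moreover have "(\<Sum>s\<in>insert x F. l'' s * f'' s) = c1 * x' + (\<Sum>s\<in>F. (c2 * y') * (l s * f' s))"
  proof -
    have "(\<Sum>s\<in>insert x F. l'' s * f'' s) = l'' x * f'' x + (\<Sum>s\<in>F. l'' s * f'' s)"
      using insert.hyps by (simp add: sum.insert)
    also have "(\<Sum>s\<in>F. l'' s * f'' s) = (\<Sum>s\<in>F. (c2 * y') * (l s * f' s))"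
      using insert.hyps by (intro sum.cong) (auto simp: l''_def f''_def algebra_simps)
    finally show ?thesis unfolding l''_def f''_def by simp
  qed
  moreover have "(\<Sum>s\<in>F. (c2 * y') * (l s * f' s)) = c2 * y'"
    using IH(2) by (simp add: sum_distrib_left[symmetric])
  ultimately show ?case using H(3) by (intro exI[of _ d] exI[of _ f''] exI[of _ l'']) auto
qed

definition content1 :: "nat \<Rightarrow> nat \<Rightarrow> (nat \<Rightarrow> nat \<Rightarrow> 'a::comm_ring_1) \<Rightarrow> bool" where
  "content1 m n A \<longleftrightarrow> (\<exists>l. (\<Sum>i<m. \<Sum>j<n. l i j * A i j) = 1)"

definition bil :: "nat \<Rightarrow> nat \<Rightarrow> (nat \<Rightarrow> 'a::comm_ring_1) \<Rightarrow> (nat \<Rightarrow> nat \<Rightarrow> 'a) \<Rightarrow> (nat \<Rightarrow> 'a) \<Rightarrow> 'a" where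
  "bil m n u A v = (\<Sum>i<m. \<Sum>j<n. u i * A i j * v j)"

definition claim :: "'a::comm_ring_1 itself \<Rightarrow> nat \<Rightarrow> nat \<Rightarrow> bool" where
  "claim T m n \<longleftrightarrow> (\<forall>A :: nat \<Rightarrow> nat \<Rightarrow> 'a. content1 m n A \<longrightarrow> (\<exists>u v. bil m n u A v = 1))"

lemma content1_0: "\<not> content1 0 n A" "\<not> content1 m 0 A"
  unfolding content1_def by auto

lemma claim_transpose:
  assumes "claim TYPE('a::comm_ring_1) m n" shows "claim TYPE('a) n m"
  unfolding claim_def
proof (intro allI impI)
  fix A :: "nat \<Rightarrow> nat \<Rightarrow> 'a" assume "content1 n m A"
  then obtain l where l: "(\<Sum>i<n. \<Sum>j<m. l i j * A i j) = 1" unfolding content1_def by auto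
  define B where "B = (\<lambda>i j. A j i)"
  have lB: "(\<Sum>i<m. \<Sum>j<n. l j i * B i j) = 1" unfolding B_def using l by (subst sum.swap) simp
  have "content1 m n B" unfolding content1_def by (rule exI[where x="\<lambda>i j. l j i"]) (use lB in simp)
  then obtain u v where "bil m n u B v = 1" using assms unfolding claim_def by blast
  then have "(\<Sum>i<m. \<Sum>j<n. u i * A j i * v j) = 1" unfolding bil_def B_def by simp
  then have "(\<Sum>j<n. \<Sum>i<m. v j * A j i * u i) = 1"
    by (subst (asm) sum.swap) (simp add: mult_ac)
  then show "\<exists>u v. bil n m u A v = 1" unfolding bil_def by blast
qed

lemma claim_1: "claim TYPE('a::comm_ring_1) 1 n"
  unfolding claim_def
proof (intro allI impI)
  fix A :: "nat \<Rightarrow> nat \<Rightarrow> 'a" assume "content1 1 n A"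
  then obtain l where l: "(\<Sum>i<1. \<Sum>j<n. l i j * A i j) = 1" unfolding content1_def by auto
  then have l1: "(\<Sum>i<1. \<Sum>j<n. 1 * A i j * l 0 j) = 1" by (simp add: mult_ac)
  show "\<exists>u v. bil 1 n u A v = 1" unfolding bil_def
    by (rule exI[where x="\<lambda>_. 1"], rule exI[where x="l 0"]) (use l1 in simp)
qed

lemma sum2: "(\<Sum>i<(2::nat). f i) = f 0 + f 1"
  by (simp add: numeral_2_eq_2)

lemma claim_2_2:
  assumes bez: "bezout_ring TYPE('a::comm_ring_1)" and dim: "krull_dim_le_one TYPE('a)"
    and comp: "compact_space (subtopology (zariski_topology :: 'a set topology) MinSpec)"
  shows "claim TYPE('a) 2 2"
  unfolding claim_def
proof (intro allI impI)
  fix A :: "nat \<Rightarrow> nat \<Rightarrow> 'a" assume "content1 2 2 A"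
  then obtain l where l: "(\<Sum>i<2. \<Sum>j<2. l i j * A i j) = 1" unfolding content1_def by auto
  then have "l 0 0 * A 0 0 + l 0 1 * A 0 1 + l 1 0 * A 1 0 + l 1 1 * A 1 1 = 1"
    unfolding sum2 by (simp add: add.assoc)
  then obtain p q s t where "p * (A 0 0 * s + A 0 1 * t) + q * (A 1 0 * s + A 1 1 * t) = 1"
    using K2[OF bez dim comp] by blast
  then have "bil 2 2 (\<lambda>i. if i = 0 then p else q) A (\<lambda>j. if j = 0 then s else t) = 1"
    unfolding bil_def sum2 by (simp add: algebra_simps)
  then show "\<exists>u v. bil 2 2 u A v = 1" by blast
qed

lemma claim_rows:
  assumes herm: "\<And>a b :: 'a::comm_ring_1. \<exists>d x' y' c1 c2. a = d * x' \<and> b = d * y' \<and> c1 * x' + c2 * y' = 1"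
    and two: "claim TYPE('a) 2 n"
  shows "claim TYPE('a) (Suc m) n"
proof (induction m)
  case 0 then show ?case using claim_1 by simp
next
  case (Suc m)
  define M where "M = Suc m"
  have IH: "claim TYPE('a) M n" using Suc M_def by simp
  show ?case unfolding claim_def M_def[symmetric]
  proof (intro allI impI)
    fix A :: "nat \<Rightarrow> nat \<Rightarrow> 'a" assume cA: "content1 (Suc M) n A"
    have "n \<noteq> 0"
    proof
      assume "n = 0" then show False using cA unfolding content1_def by simp
    qed
    then have ne: "{..<M} \<times> {..<n} \<noteq> {}" unfolding M_def by auto
    obtain c f' lam where cf: "\<forall>s\<in>{..<M} \<times> {..<n}. (\<lambda>(i, j). A i j) s = c * f' s"
      and lam: "(\<Sum>s\<in>{..<M} \<times> {..<n}. lam s * f' s) = 1"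
      using hermite_fin[OF herm _ ne, of "\<lambda>(i, j). A i j"] by blast
    define B where "B = (\<lambda>i j. f' (i, j))"
    have AB: "A i j = c * B i j" if "i < M" "j < n" for i j using cf that unfolding B_def by auto
    have lB: "(\<Sum>i<M. \<Sum>j<n. lam (i, j) * B i j) = 1"
      using lam unfolding B_def by (simp add: sum.cartesian_product)
    have "content1 M n B" unfolding content1_def
      by (rule exI[where x="\<lambda>i j. lam (i, j)"]) (use lB in simp)
    then obtain u' v' where uv': "bil M n u' B v' = 1" using IH unfolding claim_def by blast
    obtain l where l: "(\<Sum>i<Suc M. \<Sum>j<n. l i j * A i j) = 1" using cA unfolding content1_def by auto
    define C where "C = (\<lambda>(i::nat) (j::nat). if i = 0 then (\<Sum>k<M. u' k * A k j) else A M j)"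
    define X where "X = (\<Sum>i<M. \<Sum>j<n. l i j * B i j)"
    have "(\<Sum>i<M. \<Sum>j<n. l i j * A i j) = c * X"
      unfolding X_def sum_distrib_left by (intro sum.cong refl) (simp add: AB mult_ac)
    moreover have "c = (\<Sum>j<n. C 0 j * v' j)"
    proof -
      have "c = c * bil M n u' B v'" using uv' by simp
      also have "\<dots> = (\<Sum>i<M. \<Sum>j<n. u' i * A i j * v' j)"
        unfolding bil_def sum_distrib_left by (intro sum.cong refl) (simp add: AB mult_ac)
      also have "\<dots> = (\<Sum>j<n. C 0 j * v' j)"
        unfolding C_def by (subst sum.swap) (simp add: sum_distrib_right)
      finally show ?thesis .
    qed
    ultimately have "1 = (\<Sum>j<n. C 0 j * v' j) * X + (\<Sum>j<n. l M j * C 1 j)"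
      using l unfolding C_def by simp
    also have "\<dots> = (\<Sum>i<2. \<Sum>j<n. (\<lambda>i j. if i = 0 then v' j * X else l M j) i j * C i j)"
      unfolding sum2 sum_distrib_right by (simp add: mult_ac)
    finally have eqC: "(\<Sum>i<2. \<Sum>j<n. (\<lambda>i j. if i = 0 then v' j * X else l M j) i j * C i j) = 1" by simp
    have "content1 2 n C" unfolding content1_def
      by (rule exI[where x="\<lambda>i j. if i = 0 then v' j * X else l M j"]) (rule eqC)
    then obtain u2 v where uv: "bil 2 n u2 C v = 1" using two unfolding claim_def by blast
    define u where "u = (\<lambda>i. if i < M then u2 0 * u' i else u2 1)"
    have "bil (Suc M) n u A v = (\<Sum>i<M. \<Sum>j<n. u2 0 * u' i * A i j * v j) + (\<Sum>j<n. u2 1 * A M j * v j)"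
      unfolding bil_def u_def by (simp add: mult_ac)
    also have "(\<Sum>i<M. \<Sum>j<n. u2 0 * u' i * A i j * v j) = (\<Sum>j<n. u2 0 * C 0 j * v j)"
      unfolding C_def by (subst sum.swap) (simp add: sum_distrib_left sum_distrib_right mult_ac)
    also have "(\<Sum>j<n. u2 0 * C 0 j * v j) + (\<Sum>j<n. u2 1 * A M j * v j) = bil 2 n u2 C v"
      unfolding bil_def sum2 C_def by simp
    finally show "\<exists>u v. bil (Suc M) n u A v = 1" using uv by metis
  qed
qed

lemma claim_all:
  assumes bez: "bezout_ring TYPE('a::comm_ring_1)" and dim: "krull_dim_le_one TYPE('a)"
    and comp: "compact_space (subtopology (zariski_topology :: 'a set topology) MinSpec)"
  shows "claim TYPE('a) m n"
proof (cases "m = 0 \<or> n = 0")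
  case True then show ?thesis unfolding claim_def by (auto simp: content1_0)
next
  case False
  then obtain m' n' where mn: "m = Suc m'" "n = Suc n'" by (metis not0_implies_Suc)
  have herm: "\<And>a b :: 'a. \<exists>d x' y' c1 c2. a = d * x' \<and> b = d * y' \<and> c1 * x' + c2 * y' = 1"
    using hermite[OF bez dim comp] by blast
  have "claim TYPE('a) (Suc n') 2" using claim_rows[OF herm claim_2_2[OF bez dim comp]] by blast
  then have "claim TYPE('a) 2 (Suc n')" by (rule claim_transpose)
  then have "claim TYPE('a) (Suc m') (Suc n')" using claim_rows[OF herm] by blast
  then show ?thesis using mn by simp
qed

definition inv_pair :: "nat \<Rightarrow> 'a::comm_ring_1 mat \<Rightarrow> 'a mat \<Rightarrow> bool" where
  "inv_pair n P P' \<longleftrightarrow> P \<in> carrier_mat n n \<and> P' \<in> carrier_mat n n \<and> P * P' = 1\<^sub>m n \<and> P' * P = 1\<^sub>m n"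

lemma inv_pair_invertible: "inv_pair n P P' \<Longrightarrow> invertible_mat P"
  unfolding inv_pair_def invertible_mat_def inverts_mat_def by auto

lemma inv_pair_carrier: "inv_pair n P P' \<Longrightarrow> P \<in> carrier_mat n n" "inv_pair n P P' \<Longrightarrow> P' \<in> carrier_mat n n"
  unfolding inv_pair_def by auto

lemma inv_pair_one: "inv_pair n (1\<^sub>m n) (1\<^sub>m n)"
  unfolding inv_pair_def by auto

lemma inv_pair_mult:
  assumes "inv_pair n P P'" "inv_pair n R R'"
  shows "inv_pair n (P * R) (R' * P')"
proof -
  have c: "P \<in> carrier_mat n n" "P' \<in> carrier_mat n n" "R \<in> carrier_mat n n" "R' \<in> carrier_mat n n"
    and e: "P * P' = 1\<^sub>m n" "P' * P = 1\<^sub>m n" "R * R' = 1\<^sub>m n" "R' * R = 1\<^sub>m n"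
    using assms unfolding inv_pair_def by auto
  have "P * R * (R' * P') = P * (R * (R' * P'))" using c by (intro assoc_mult_mat) auto
  also have "R * (R' * P') = R * R' * P'" using c by (intro assoc_mult_mat[symmetric]) auto
  also have "\<dots> = P'" using c e by simp
  finally have 1: "P * R * (R' * P') = 1\<^sub>m n" using e by simp
  have "R' * P' * (P * R) = R' * (P' * (P * R))" using c by (intro assoc_mult_mat) auto
  also have "P' * (P * R) = P' * P * R" using c by (intro assoc_mult_mat[symmetric]) auto
  also have "\<dots> = R" using c e by simp
  finally have 2: "R' * P' * (P * R) = 1\<^sub>m n" using e by simp
  show ?thesis unfolding inv_pair_def using c 1 2 by auto
qed

lemma inv_pair_transpose:
  assumes "inv_pair n P P'"
  shows "inv_pair n (transpose_mat P) (transpose_mat P')"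
proof -
  have c: "P \<in> carrier_mat n n" "P' \<in> carrier_mat n n"
    and e: "P * P' = 1\<^sub>m n" "P' * P = 1\<^sub>m n"
    using assms unfolding inv_pair_def by auto
  have "transpose_mat P * transpose_mat P' = transpose_mat (P' * P)"
    using c by (simp add: transpose_mult)
  also have "\<dots> = 1\<^sub>m n" using e by simp
  finally have 1: "transpose_mat P * transpose_mat P' = 1\<^sub>m n" .
  have "transpose_mat P' * transpose_mat P = transpose_mat (P * P')"
    using c by (simp add: transpose_mult)
  also have "\<dots> = 1\<^sub>m n" using e by simp
  finally have 2: "transpose_mat P' * transpose_mat P = 1\<^sub>m n" .
  show ?thesis unfolding inv_pair_def using c 1 2 by auto
qed

definition bdiag :: "nat \<Rightarrow> nat \<Rightarrow> 'a::comm_ring_1 mat \<Rightarrow> 'a mat \<Rightarrow> 'a mat" where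
  "bdiag a b A B = four_block_mat A (0\<^sub>m a b) (0\<^sub>m b a) B"

lemma bdiag_carrier: "A \<in> carrier_mat a a \<Longrightarrow> B \<in> carrier_mat b b \<Longrightarrow> bdiag a b A B \<in> carrier_mat (a + b) (a + b)"
  unfolding bdiag_def by auto

lemma bdiag_mult:
  assumes "A \<in> carrier_mat a a" "B \<in> carrier_mat b b" "A' \<in> carrier_mat a a" "B' \<in> carrier_mat b b"
  shows "bdiag a b A B * bdiag a b A' B' = bdiag a b (A * A') (B * B')"
  unfolding bdiag_def using assms
  by (subst mult_four_block_mat[of _ a a _ b _ b _ _ a _ b]) auto

lemma inv_pair_bdiag:
  assumes "inv_pair a A A'" "inv_pair b B B'"
  shows "inv_pair (a + b) (bdiag a b A B) (bdiag a b A' B')"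
  using assms unfolding inv_pair_def
  by (auto simp: bdiag_mult bdiag_carrier) (auto simp: bdiag_def)

lemma sum2': "(\<Sum>i\<in>{0..<(2::nat)}. f i) = f 0 + f 1"
  by (simp add: numeral_2_eq_2)

lemma less2_cases: "(i::nat) < 2 \<Longrightarrow> i = 0 \<or> i = 1" by auto

lemma completion:
  fixes u w :: "nat \<Rightarrow> 'a::comm_ring_1"
  assumes herm: "\<And>a b :: 'a. \<exists>d x' y' c1 c2. a = d * x' \<and> b = d * y' \<and> c1 * x' + c2 * y' = 1"
  shows "(\<Sum>i<m. u i * w i) = 1 \<Longrightarrow> \<exists>P P'. inv_pair m P P' \<and> (\<forall>j<m. P $$ (0,j) = u j)"
proof (induction m arbitrary: u w)
  case 0 then show ?case by simp
next
  case (Suc k)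
  show ?case
  proof (cases k)
    case 0
    then have uw: "u 0 * w 0 = 1" using Suc.prems by simp
    define P :: "'a mat" where "P = mat 1 1 (\<lambda>_. u 0)"
    define P' :: "'a mat" where "P' = mat 1 1 (\<lambda>_. w 0)"
    have "P * P' = 1\<^sub>m 1" unfolding P_def P'_def
      by (rule eq_matI) (auto simp: scalar_prod_def uw)
    moreover have "P' * P = 1\<^sub>m 1" unfolding P_def P'_def
      by (rule eq_matI) (auto simp: scalar_prod_def uw mult.commute)
    ultimately have "inv_pair 1 P P'" unfolding inv_pair_def P_def P'_def by auto
    moreover have "\<forall>j<1. P $$ (0,j) = u j" unfolding P_def by auto
    ultimately show ?thesis using 0 by auto
  next
    case (Suc k')
    have ne: "{..<k} \<noteq> {}" using Suc by auto
    obtain c t lam where t: "\<forall>i\<in>{..<k}. u (Suc i) = c * t i" and lam: "(\<Sum>i\<in>{..<k}. lam i * t i) = 1"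
      using hermite_fin[OF herm _ ne, of "\<lambda>i. u (Suc i)"] by blast
    obtain P1 P1' where P1: "inv_pair k P1 P1'" and P1r: "\<forall>j<k. P1 $$ (0,j) = t j"
    proof -
      have "(\<Sum>i<k. t i * lam i) = 1" using lam by (simp add: mult.commute)
      then show ?thesis using Suc.IH[of t lam] that by blast
    qed
    define \<alpha> where "\<alpha> = w 0"
    define \<beta> where "\<beta> = (\<Sum>i<k. t i * w (Suc i))"
    have "1 = (\<Sum>i<Suc k. u i * w i)" using Suc.prems by simp
    also have "\<dots> = u 0 * w 0 + (\<Sum>i<k. u (Suc i) * w (Suc i))" by (rule sum.lessThan_Suc_shift)
    also have "(\<Sum>i<k. u (Suc i) * w (Suc i)) = (\<Sum>i<k. c * (t i * w (Suc i)))"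
      using t by (intro sum.cong) (auto simp: mult.assoc)
    finally have ab: "u 0 * \<alpha> + c * \<beta> = 1" unfolding \<alpha>_def \<beta>_def by (simp add: sum_distrib_left)
    define T2 :: "'a mat" where "T2 = mat 2 2 (\<lambda>(i,j). if i = 0 then (if j = 0 then u 0 else c) else (if j = 0 then - \<beta> else \<alpha>))"
    define T2' :: "'a mat" where "T2' = mat 2 2 (\<lambda>(i,j). if i = 0 then (if j = 0 then \<alpha> else - c) else (if j = 0 then \<beta> else u 0))"
    have ab': "\<beta> * c + \<alpha> * u 0 = 1" using ab by (simp add: algebra_simps)
    have "T2 * T2' = 1\<^sub>m 2" unfolding T2_def T2'_def
      by (rule eq_matI) (auto simp: scalar_prod_def sum2' ab ab' algebra_simps dest!: less2_cases)
    moreover have "T2' * T2 = 1\<^sub>m 2" unfolding T2_def T2'_def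
      by (rule eq_matI) (auto simp: scalar_prod_def sum2' ab ab' algebra_simps dest!: less2_cases)
    ultimately have T2i: "inv_pair 2 T2 T2'" unfolding inv_pair_def T2_def T2'_def by auto
    define T where "T = bdiag 2 k' T2 (1\<^sub>m k')"
    define T' where "T' = bdiag 2 k' T2' (1\<^sub>m k')"
    have "inv_pair (2 + k') T T'" unfolding T_def T'_def by (rule inv_pair_bdiag[OF T2i inv_pair_one])
    then have Ti: "inv_pair (Suc k) T T'" using Suc by simp
    define E where "E = bdiag 1 k (1\<^sub>m 1) P1"
    define E' where "E' = bdiag 1 k (1\<^sub>m 1) P1'"
    have "inv_pair (1 + k) E E'" unfolding E_def E'_def by (rule inv_pair_bdiag[OF inv_pair_one P1])
    then have Ei: "inv_pair (Suc k) E E'" by simp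
    have Pi: "inv_pair (Suc k) (T * E) (E' * T')" by (rule inv_pair_mult[OF Ti Ei])
    have P1c: "P1 \<in> carrier_mat k k" using P1 unfolding inv_pair_def by auto
    have Tc: "T \<in> carrier_mat (Suc k) (Suc k)" and Ec: "E \<in> carrier_mat (Suc k) (Suc k)"
      using Ti Ei unfolding inv_pair_def by auto
    have T0: "T $$ (0, l) = (if l = 0 then u 0 else if l = 1 then c else 0)" if "l < Suc k" for l
      using that Suc unfolding T_def bdiag_def T2_def by auto
    have E0: "E $$ (0, j) = (if j = 0 then 1 else 0)" if "j < Suc k" for j
      using that P1c unfolding E_def bdiag_def by auto
    have E1: "E $$ (1, j) = (if j = 0 then 0 else t (j - 1))" if "j < Suc k" for j
      using that P1c P1r Suc unfolding E_def bdiag_def by auto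
    have row0: "(T * E) $$ (0, j) = u j" if j: "j < Suc k" for j
    proof -
      have "(T * E) $$ (0, j) = (\<Sum>l<Suc k. T $$ (0, l) * E $$ (l, j))"
        using Tc Ec j by (simp add: scalar_prod_def atLeast0LessThan)
      also have "\<dots> = (\<Sum>l<Suc k. (if l = 0 then u 0 * E $$ (0, j) else if l = 1 then c * E $$ (1, j) else 0))"
        by (intro sum.cong refl) (simp add: T0)
      also have "\<dots> = u 0 * E $$ (0, j) + c * E $$ (1, j)"
        using Suc by (simp add: sum.lessThan_Suc_shift del: sum.lessThan_Suc)
      also have "\<dots> = u j"
      proof (cases j)
        case 0 then show ?thesis using E0 E1 by simp
      next
        case (Suc j')
        then have "j' < k" using j by simp
        then show ?thesis using E0[OF j] E1[OF j] t Suc by simp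
      qed
      finally show ?thesis .
    qed
    show ?thesis using Pi row0 by blast
  qed
qed

lemma assoc5:
  fixes E P B Q F :: "'a::comm_ring_1 mat"
  assumes c: "E \<in> carrier_mat a a" "P \<in> carrier_mat a a" "B \<in> carrier_mat a b" "Q \<in> carrier_mat b b" "F \<in> carrier_mat b b"
  shows "E * P * B * (Q * F) = E * (P * B * Q) * F"
proof -
  have 1: "E * P * B * (Q * F) = E * P * B * Q * F"
    using c by (intro assoc_mult_mat[symmetric]) auto
  have 2: "E * P * B = E * (P * B)" using c by (intro assoc_mult_mat) auto
  have 3: "E * (P * B) * Q = E * (P * B * Q)" using c by (intro assoc_mult_mat) auto
  have "E * P * B * (Q * F) = E * P * B * Q * F" by (rule 1)
  also have "\<dots> = E * (P * B) * Q * F" by (simp only: 2)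
  also have "\<dots> = E * (P * B * Q) * F" by (simp only: 3)
  finally show ?thesis .
qed

lemma smult5:
  fixes E P B Q F :: "'a::comm_ring_1 mat"
  assumes c: "E \<in> carrier_mat a a" "P \<in> carrier_mat a a" "B \<in> carrier_mat a b" "Q \<in> carrier_mat b b" "F \<in> carrier_mat b b"
  shows "E * P * (g \<cdot>\<^sub>m B) * (Q * F) = g \<cdot>\<^sub>m (E * (P * B * Q) * F)"
proof -
  have "E * P * (g \<cdot>\<^sub>m B) = g \<cdot>\<^sub>m (E * P * B)"
    using c by (intro mult_smult_distrib[of _ a a]) auto
  moreover have "(g \<cdot>\<^sub>m (E * P * B)) * (Q * F) = g \<cdot>\<^sub>m (E * P * B * (Q * F))"
    using c by (intro mult_smult_assoc_mat[of _ a b]) auto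
  ultimately show ?thesis using assoc5[OF c] by simp
qed

lemma pivot:
  fixes A :: "'a::comm_ring_1 mat"
  assumes herm: "\<And>a b :: 'a. \<exists>d x' y' c1 c2. a = d * x' \<and> b = d * y' \<and> c1 * x' + c2 * y' = 1"
    and cl: "\<And>m n. claim TYPE('a) m n"
    and A: "A \<in> carrier_mat (Suc m) (Suc n)"
  shows "\<exists>P P' Q Q' g D. inv_pair (Suc m) P P' \<and> inv_pair (Suc n) Q Q' \<and> D \<in> carrier_mat m n \<and>
     P * A * Q = four_block_mat (g \<cdot>\<^sub>m 1\<^sub>m 1) (0\<^sub>m 1 n) (0\<^sub>m m 1) D"
proof -
  have ne: "{..<Suc m} \<times> {..<Suc n} \<noteq> {}" by auto
  obtain g f' lam where cf: "\<forall>s\<in>{..<Suc m} \<times> {..<Suc n}. (\<lambda>(i, j). A $$ (i, j)) s = g * f' s"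
    and lam: "(\<Sum>s\<in>{..<Suc m} \<times> {..<Suc n}. lam s * f' s) = 1"
    using hermite_fin[OF herm _ ne, of "\<lambda>(i, j). A $$ (i, j)"] by blast
  define A' where "A' = mat (Suc m) (Suc n) f'"
  have A'c: "A' \<in> carrier_mat (Suc m) (Suc n)" unfolding A'_def by simp
  have hA: "A = g \<cdot>\<^sub>m A'"
    by (rule eq_matI) (use A cf in \<open>auto simp: A'_def\<close>)
  have "(\<Sum>i<Suc m. \<Sum>j<Suc n. lam (i, j) * A' $$ (i, j)) = (\<Sum>i<Suc m. \<Sum>j<Suc n. lam (i, j) * f' (i, j))"
    by (intro sum.cong refl) (simp add: A'_def)
  also have "\<dots> = (\<Sum>(i,j)\<in>{..<Suc m} \<times> {..<Suc n}. lam (i, j) * f' (i, j))"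
    by (rule sum.cartesian_product)
  also have "\<dots> = (\<Sum>s\<in>{..<Suc m} \<times> {..<Suc n}. lam s * f' s)"
    by (rule sum.cong) auto
  finally have lB: "(\<Sum>i<Suc m. \<Sum>j<Suc n. lam (i, j) * A' $$ (i, j)) = 1" using lam by simp
  have "content1 (Suc m) (Suc n) (\<lambda>i j. A' $$ (i, j))" unfolding content1_def
    by (rule exI[where x="\<lambda>i j. lam (i, j)"]) (use lB in simp)
  then obtain u v where uv: "bil (Suc m) (Suc n) u (\<lambda>i j. A' $$ (i, j)) v = 1"
    using cl unfolding claim_def by blast
  have "(\<Sum>i<Suc m. u i * (\<Sum>j<Suc n. A' $$ (i, j) * v j)) = 1"
    using uv unfolding bil_def by (simp only: sum_distrib_left mult.assoc)
  then obtain P P' where P: "inv_pair (Suc m) P P'" and Pr: "\<forall>j<Suc m. P $$ (0,j) = u j"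
    using completion[OF herm, where m="Suc m" and u=u and w="\<lambda>i. \<Sum>j<Suc n. A' $$ (i, j) * v j"] by blast
  have "(\<Sum>j<Suc n. v j * (\<Sum>i<Suc m. u i * A' $$ (i, j))) = 1"
  proof -
    have "(\<Sum>j<Suc n. v j * (\<Sum>i<Suc m. u i * A' $$ (i, j))) = (\<Sum>i<Suc m. \<Sum>j<Suc n. u i * A' $$ (i, j) * v j)"
      unfolding sum_distrib_left by (subst sum.swap) (simp only: mult_ac)
    then show ?thesis using uv unfolding bil_def by simp
  qed
  then obtain R R' where R: "inv_pair (Suc n) R R'" and Rr: "\<forall>j<Suc n. R $$ (0,j) = v j"
    using completion[OF herm, where m="Suc n" and u=v and w="\<lambda>j. \<Sum>i<Suc m. u i * A' $$ (i, j)"] by blast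
  define Q where "Q = transpose_mat R"
  define Q' where "Q' = transpose_mat R'"
  have Q: "inv_pair (Suc n) Q Q'" unfolding Q_def Q'_def by (rule inv_pair_transpose[OF R])
  have Pc: "P \<in> carrier_mat (Suc m) (Suc m)" and Qc: "Q \<in> carrier_mat (Suc n) (Suc n)"
    and Rc: "R \<in> carrier_mat (Suc n) (Suc n)"
    using P Q R unfolding inv_pair_def by auto
  have Qc0: "Q $$ (j, 0) = v j" if "j < Suc n" for j
    using that Rc Rr unfolding Q_def by auto
  define H where "H = P * A' * Q"
  have Hc: "H \<in> carrier_mat (Suc m) (Suc n)" unfolding H_def using Pc A'c Qc by auto
  have PA: "(P * A') $$ (0, j) = (\<Sum>i<Suc m. u i * A' $$ (i, j))" if "j < Suc n" for j
    using that Pc A'c Pr by (simp add: scalar_prod_def atLeast0LessThan)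
  have "H $$ (0, 0) = row (P * A') 0 \<bullet> col Q 0"
    unfolding H_def using Pc A'c Qc by (intro index_mult_mat(1)) auto
  also have "\<dots> = (\<Sum>j<Suc n. (P * A') $$ (0, j) * Q $$ (j, 0))"
    unfolding scalar_prod_def atLeast0LessThan by (intro sum.cong) (use Pc A'c Qc in auto)
  also have "\<dots> = (\<Sum>j<Suc n. (\<Sum>i<Suc m. u i * A' $$ (i, j)) * v j)"
    by (intro sum.cong refl) (simp add: PA Qc0)
  also have "\<dots> = bil (Suc m) (Suc n) u (\<lambda>i j. A' $$ (i, j)) v"
    unfolding bil_def sum_distrib_right by (subst sum.swap) (rule refl)
  finally have H00: "H $$ (0, 0) = 1" using uv by simp
  define hr where "hr = mat 1 n (\<lambda>(_, j). H $$ (0, Suc j))"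
  define hc where "hc = mat m 1 (\<lambda>(i, _). H $$ (Suc i, 0))"
  define H4 where "H4 = mat m n (\<lambda>(i, j). H $$ (Suc i, Suc j))"
  have hrc: "hr \<in> carrier_mat 1 n" and hcc: "hc \<in> carrier_mat m 1" and H4c: "H4 \<in> carrier_mat m n"
    unfolding hr_def hc_def H4_def by auto
  have Hblock: "H = four_block_mat (1\<^sub>m 1) hr hc H4"
  proof (rule eq_matI)
    fix i j assume ij: "i < dim_row (four_block_mat (1\<^sub>m 1) hr hc H4)" "j < dim_col (four_block_mat (1\<^sub>m 1) hr hc H4)"
    then have i: "i < Suc m" and j: "j < Suc n" using hrc hcc H4c by auto
    show "H $$ (i, j) = four_block_mat (1\<^sub>m 1) hr hc H4 $$ (i, j)"
    proof (cases "i = 0")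
      case True
      then show ?thesis using j H00 hrc hcc H4c unfolding hr_def
        by (cases j) auto
    next
      case False
      then obtain i' where i': "i = Suc i'" by (cases i) auto
      then show ?thesis using i j hrc hcc H4c unfolding hc_def H4_def
        by (cases j) auto
    qed
  qed (use Hc hrc hcc H4c in auto)
  have zs: "hc + - hc = 0\<^sub>m m 1" "- hc + hc = 0\<^sub>m m 1" "hr + - hr = 0\<^sub>m 1 n" "- hr + hr = 0\<^sub>m 1 n"
    "\<And>a b. - (0\<^sub>m a b :: 'a mat) = 0\<^sub>m a b"
    by (rule eq_matI; use hcc hrc in auto)+
  define E where "E = four_block_mat (1\<^sub>m 1) (0\<^sub>m 1 m) (- hc) (1\<^sub>m m)"
  define E' where "E' = four_block_mat (1\<^sub>m 1) (0\<^sub>m 1 m) hc (1\<^sub>m m)"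
  define F where "F = four_block_mat (1\<^sub>m 1) (- hr) (0\<^sub>m n 1) (1\<^sub>m n)"
  define F' where "F' = four_block_mat (1\<^sub>m 1) hr (0\<^sub>m n 1) (1\<^sub>m n)"
  have "E * E' = 1\<^sub>m (1 + m)" unfolding E_def E'_def
    by (subst mult_four_block_mat[of _ 1 1 _ m _ m _ _ 1 _ m]) (use hcc zs in auto)
  moreover have "E' * E = 1\<^sub>m (1 + m)" unfolding E_def E'_def
    by (subst mult_four_block_mat[of _ 1 1 _ m _ m _ _ 1 _ m]) (use hcc zs in auto)
  ultimately have Ei: "inv_pair (Suc m) E E'" unfolding inv_pair_def E_def E'_def using hcc by auto
  have "F * F' = 1\<^sub>m (1 + n)" unfolding F_def F'_def
    by (subst mult_four_block_mat[of _ 1 1 _ n _ n _ _ 1 _ n]) (use hrc zs in auto)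
  moreover have "F' * F = 1\<^sub>m (1 + n)" unfolding F_def F'_def
    by (subst mult_four_block_mat[of _ 1 1 _ n _ n _ _ 1 _ n]) (use hrc zs in auto)
  ultimately have Fi: "inv_pair (Suc n) F F'" unfolding inv_pair_def F_def F'_def using hrc by auto
  define X where "X = - hc * hr + H4"
  have Xc: "X \<in> carrier_mat m n" unfolding X_def using hcc hrc H4c by auto
  have EH: "E * H = four_block_mat (1\<^sub>m 1) hr (0\<^sub>m m 1) X" unfolding E_def Hblock X_def
    by (subst mult_four_block_mat[of _ 1 1 _ m _ m _ _ 1 _ n]) (use hcc hrc H4c zs in auto)
  have EHF: "E * H * F = four_block_mat (1\<^sub>m 1) (0\<^sub>m 1 n) (0\<^sub>m m 1) X" unfolding EH F_def
    by (subst mult_four_block_mat[of _ 1 1 _ n _ m _ _ 1 _ n]) (use hcc hrc Xc zs in auto)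
  have Ec: "E \<in> carrier_mat (Suc m) (Suc m)" and Fc: "F \<in> carrier_mat (Suc n) (Suc n)"
    using Ei Fi unfolding inv_pair_def by auto
  have "E * P * A * (Q * F) = g \<cdot>\<^sub>m (E * H * F)"
    unfolding hA H_def by (rule smult5[OF Ec Pc A'c Qc Fc])
  also have "\<dots> = four_block_mat (g \<cdot>\<^sub>m 1\<^sub>m 1) (0\<^sub>m 1 n) (0\<^sub>m m 1) (g \<cdot>\<^sub>m X)"
    unfolding EHF using Xc by (subst smult_four_block_mat) auto
  finally have fin: "E * P * A * (Q * F) = four_block_mat (g \<cdot>\<^sub>m 1\<^sub>m 1) (0\<^sub>m 1 n) (0\<^sub>m m 1) (g \<cdot>\<^sub>m X)" .
  have "inv_pair (Suc m) (E * P) (P' * E')" by (rule inv_pair_mult[OF Ei P])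
  moreover have "inv_pair (Suc n) (Q * F) (F' * Q')" by (rule inv_pair_mult[OF Q Fi])
  moreover have "g \<cdot>\<^sub>m X \<in> carrier_mat m n" using Xc by simp
  ultimately show ?thesis using fin by blast
qed

lemma diag_block:
  fixes D :: "'a::comm_ring_1 mat"
  assumes "diagonal_mat D" "D \<in> carrier_mat m n" "c \<in> carrier_mat 1 1"
  shows "diagonal_mat (four_block_mat c (0\<^sub>m 1 n) (0\<^sub>m m 1) D)"
  using assms unfolding diagonal_mat_def
  by (auto simp: less_Suc_eq_0_disj) blast

lemma diag_main:
  fixes A :: "'a::comm_ring_1 mat"
  assumes herm: "\<And>a b :: 'a. \<exists>d x' y' c1 c2. a = d * x' \<and> b = d * y' \<and> c1 * x' + c2 * y' = 1"
    and cl: "\<And>m n. claim TYPE('a) m n"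
  shows "A \<in> carrier_mat m n \<Longrightarrow> \<exists>P P' Q Q'. inv_pair m P P' \<and> inv_pair n Q Q' \<and> diagonal_mat (P * A * Q)"
proof (induction m arbitrary: n A)
  case 0
  have "diagonal_mat (1\<^sub>m 0 * A * 1\<^sub>m n)" using 0 unfolding diagonal_mat_def by auto
  then show ?case using inv_pair_one by blast
next
  case (Suc m)
  show ?case
  proof (cases n)
    case 0
    have "diagonal_mat (1\<^sub>m (Suc m) * A * 1\<^sub>m n)" using Suc.prems 0 unfolding diagonal_mat_def by auto
    then show ?thesis using inv_pair_one by blast
  next
    case (Suc n')
    then have A: "A \<in> carrier_mat (Suc m) (Suc n')" using Suc.prems by simp
    obtain P1 P1' Q1 Q1' g D where P1: "inv_pair (Suc m) P1 P1'" and Q1: "inv_pair (Suc n') Q1 Q1'"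
      and Dc: "D \<in> carrier_mat m n'"
      and R: "P1 * A * Q1 = four_block_mat (g \<cdot>\<^sub>m 1\<^sub>m 1) (0\<^sub>m 1 n') (0\<^sub>m m 1) D"
      using pivot[OF herm cl A] by blast
    obtain P3 P3' Q3 Q3' where P3: "inv_pair m P3 P3'" and Q3: "inv_pair n' Q3 Q3'"
      and dg: "diagonal_mat (P3 * D * Q3)"
      using Suc.IH[OF Dc] by blast
    have P3c: "P3 \<in> carrier_mat m m" and Q3c: "Q3 \<in> carrier_mat n' n'" using P3 Q3 unfolding inv_pair_def by auto
    define X where "X = bdiag 1 m (1\<^sub>m 1) P3"
    define X' where "X' = bdiag 1 m (1\<^sub>m 1) P3'"
    define Y where "Y = bdiag 1 n' (1\<^sub>m 1) Q3"
    define Y' where "Y' = bdiag 1 n' (1\<^sub>m 1) Q3'"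
    have "inv_pair (1 + m) X X'" unfolding X_def X'_def by (rule inv_pair_bdiag[OF inv_pair_one P3])
    then have Xi: "inv_pair (Suc m) X X'" by simp
    have "inv_pair (1 + n') Y Y'" unfolding Y_def Y'_def by (rule inv_pair_bdiag[OF inv_pair_one Q3])
    then have Yi: "inv_pair (Suc n') Y Y'" by simp
    have Xc: "X \<in> carrier_mat (Suc m) (Suc m)" and Yc: "Y \<in> carrier_mat (Suc n') (Suc n')"
      and P1c: "P1 \<in> carrier_mat (Suc m) (Suc m)" and Q1c: "Q1 \<in> carrier_mat (Suc n') (Suc n')"
      using Xi Yi P1 Q1 unfolding inv_pair_def by auto
    have "X * P1 * A * (Q1 * Y) = X * (P1 * A * Q1) * Y" by (rule assoc5[OF Xc P1c A Q1c Yc])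
    also have "\<dots> = four_block_mat (g \<cdot>\<^sub>m 1\<^sub>m 1) (0\<^sub>m 1 n') (0\<^sub>m m 1) (P3 * D) * Y"
      unfolding R X_def bdiag_def
      by (subst mult_four_block_mat[of _ 1 1 _ m _ m _ _ 1 _ n']) (use P3c Dc in auto)
    also have "\<dots> = four_block_mat (g \<cdot>\<^sub>m 1\<^sub>m 1) (0\<^sub>m 1 n') (0\<^sub>m m 1) (P3 * D * Q3)"
      unfolding Y_def bdiag_def
      by (subst mult_four_block_mat[of _ 1 1 _ n' _ m _ _ 1 _ n']) (use P3c Dc Q3c in auto)
    finally have eq: "X * P1 * A * (Q1 * Y) = four_block_mat (g \<cdot>\<^sub>m 1\<^sub>m 1) (0\<^sub>m 1 n') (0\<^sub>m m 1) (P3 * D * Q3)" .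
    have "diagonal_mat (X * P1 * A * (Q1 * Y))" unfolding eq
      by (rule diag_block[OF dg]) (use P3c Dc Q3c in auto)
    moreover have "inv_pair (Suc m) (X * P1) (P1' * X')" by (rule inv_pair_mult[OF Xi P1])
    moreover have "inv_pair (Suc n') (Q1 * Y) (Y' * Q1')" by (rule inv_pair_mult[OF Q1 Yi])
    ultimately show ?thesis using Suc by blast
  qed
qed

theorem corollary3p4:
  assumes "bezout_ring TYPE('a::comm_ring_1)"
    and "krull_dim_le_one TYPE('a)"
    and "compact_space (subtopology (zariski_topology :: 'a set topology) MinSpec)"
  shows "kaplansky_ring TYPE('a)"
proof -
  have herm: "\<And>a b :: 'a. \<exists>d x' y' c1 c2. a = d * x' \<and> b = d * y' \<and> c1 * x' + c2 * y' = 1"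
    using hermite[OF assms] by blast
  have cl: "\<And>m n. claim TYPE('a) m n" using claim_all[OF assms] by blast
  show ?thesis unfolding kaplansky_ring_def
  proof (intro allI impI)
    fix m n and A :: "'a mat" assume A: "A \<in> carrier_mat m n"
    obtain P P' Q Q' where PQ: "inv_pair m P P'" "inv_pair n Q Q'" "diagonal_mat (P * A * Q)"
      using diag_main[OF herm cl A] by blast
    then show "\<exists>P Q. P \<in> carrier_mat m m \<and> Q \<in> carrier_mat n n \<and> invertible_mat P \<and> invertible_mat Q
        \<and> diagonal_mat (P * A * Q)"
      using inv_pair_invertible inv_pair_carrier by blast
  qed
qed

end
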